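(* Let $(X,\mathcal{M})$ be a measurable space, $\Sigma$ a compact Hausdorff group with Haar probability measure $\mu_\Sigma$, and $T:\Sigma\times X\to X$ a measurable group action. Let $V\subset\mathcal{M}_b(X)$ be a separable reproducing kernel Hilbert space with reproducing kernel $k:X\times X\to\mathbb{R}$, and $\Gamma=\{\gamma\in V:\|\gamma\|_V\le1\}$. If $k$ is $\Sigma$-invariant, i.e. $k(T_\sigma(x),T_\sigma(y))=k(x,y)$ for all $\sigma\in\Sigma$, $x,y\in X$, then $S_\Sigma[\Gamma]\subset\Gamma$.
   Context: $S_\Sigma[\gamma](x)=\int_\Sigma\gamma(T_\sigma(x))\mu_\Sigma(d\sigma)$. *)

theory Defs
  imports "HOL-Analysis.Analysis" "HOL-Probability.Probability"
begin

text \<open>Haar probability measure on a compact Hausdorff topological group (group written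
additively, not necessarily commutative): a left-invariant, regular (Radon) Borel
probability measure.\<close>
definition haar_probability :: "'g::topological_group_add measure \<Rightarrow> bool" where
  "haar_probability \<mu> \<longleftrightarrow>
     sets \<mu> = sets (borel :: 'g measure) \<and>
     prob_space \<mu> \<and>
     (\<forall>g A. A \<in> sets borel \<longrightarrow> emeasure \<mu> ((\<lambda>s. g + s) ` A) = emeasure \<mu> A) \<and>
     (\<forall>A \<in> sets borel. emeasure \<mu> A = (INF U \<in> {U. open U \<and> A \<subseteq> U}. emeasure \<mu> U)) \<and>
     (\<forall>U. open U \<longrightarrow> emeasure \<mu> U = (SUP K \<in> {K. compact K \<and> K \<subseteq> U}. emeasure \<mu> K))"

definition measurable_action :: "'a measure \<Rightarrow> ('g::topological_group_add \<Rightarrow> 'a \<Rightarrow> 'a) \<Rightarrow> bool" where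
  "measurable_action M T \<longleftrightarrow>
     (\<lambda>(s, x). T s x) \<in> measurable (borel \<Otimes>\<^sub>M M) M \<and>
     (\<forall>x \<in> space M. T 0 x = x) \<and>
     (\<forall>s t. \<forall>x \<in> space M. T (s + t) x = T s (T t x))"

text \<open>Functions on \<open>X\<close> are represented extensionally (value 0 outside \<open>X\<close>).\<close>
definition ext0 :: "'a set \<Rightarrow> ('a \<Rightarrow> real) \<Rightarrow> ('a \<Rightarrow> real)" where
  "ext0 X f = (\<lambda>x. if x \<in> X then f x else 0)"

definition hnorm :: "(('a \<Rightarrow> real) \<Rightarrow> ('a \<Rightarrow> real) \<Rightarrow> real) \<Rightarrow> ('a \<Rightarrow> real) \<Rightarrow> real" where
  "hnorm ip f = sqrt (ip f f)"

definition rkhs :: "'a set \<Rightarrow> ('a \<Rightarrow> real) set \<Rightarrow> (('a \<Rightarrow> real) \<Rightarrow> ('a \<Rightarrow> real) \<Rightarrow> real)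
                     \<Rightarrow> ('a \<Rightarrow> 'a \<Rightarrow> real) \<Rightarrow> bool" where
  "rkhs X V ip k \<longleftrightarrow>
     (\<forall>f \<in> V. ext0 X f = f) \<and>
     (\<lambda>x. 0) \<in> V \<and>
     (\<forall>f \<in> V. \<forall>g \<in> V. (\<lambda>x. f x + g x) \<in> V) \<and>
     (\<forall>c. \<forall>f \<in> V. (\<lambda>x. c * f x) \<in> V) \<and>
     (\<forall>f \<in> V. \<forall>g \<in> V. ip f g = ip g f) \<and>
     (\<forall>f \<in> V. \<forall>g \<in> V. \<forall>h \<in> V. ip (\<lambda>x. f x + g x) h = ip f h + ip g h) \<and>
     (\<forall>c. \<forall>f \<in> V. \<forall>g \<in> V. ip (\<lambda>x. c * f x) g = c * ip f g) \<and>
     (\<forall>f \<in> V. ip f f \<ge> 0) \<and>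
     (\<forall>f \<in> V. ip f f = 0 \<longrightarrow> f = (\<lambda>x. 0)) \<and>
     (\<forall>s. (\<forall>n. s n \<in> V) \<longrightarrow>
          (\<forall>e>0. \<exists>N. \<forall>m\<ge>N. \<forall>n\<ge>N. hnorm ip (\<lambda>x. s m x - s n x) < e) \<longrightarrow>
          (\<exists>f \<in> V. (\<lambda>n. hnorm ip (\<lambda>x. s n x - f x)) \<longlonglongrightarrow> 0)) \<and>
     (\<forall>y \<in> X. ext0 X (\<lambda>x. k x y) \<in> V \<and> (\<forall>f \<in> V. ip f (ext0 X (\<lambda>x. k x y)) = f y))"

definition separable_hs :: "('a \<Rightarrow> real) set \<Rightarrow> (('a \<Rightarrow> real) \<Rightarrow> ('a \<Rightarrow> real) \<Rightarrow> real) \<Rightarrow> bool" where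
  "separable_hs V ip \<longleftrightarrow>
     (\<exists>D \<subseteq> V. countable D \<and> (\<forall>f \<in> V. \<forall>e>0. \<exists>d \<in> D. hnorm ip (\<lambda>x. f x - d x) < e))"

definition symmetrize :: "'g measure \<Rightarrow> 'a measure \<Rightarrow> ('g \<Rightarrow> 'a \<Rightarrow> 'a) \<Rightarrow> ('a \<Rightarrow> real) \<Rightarrow> ('a \<Rightarrow> real)" where
  "symmetrize \<mu> M T \<gamma> = ext0 (space M) (\<lambda>x. \<integral>\<sigma>. \<gamma> (T \<sigma> x) \<partial>\<mu>)"

end

theory Submission
  imports Defs
begin



lemma var_half:
  fixes s l a b :: real
  assumes s: "s > 0" and H: "\<And>t. t > 0 \<Longrightarrow> s + t*l \<le> s * sqrt (1 + 2*t*a + t^2*b)"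
  shows "l \<le> s*a"
proof (rule ccontr)
  assume "\<not> l \<le> s*a"
  then have e: "l - s*a > 0" by simp
  define C where "C = \<bar>s^2*b - l^2\<bar> + 1"
  have C: "C > 0" unfolding C_def by simp
  define t where "t = min (s/(2*(\<bar>l\<bar>+1))) (s*(l - s*a)/C)"
  have t: "t > 0" unfolding t_def using s e C by simp
  have t1: "t \<le> s/(2*(\<bar>l\<bar>+1))" unfolding t_def by simp
  have t2: "t \<le> s*(l - s*a)/C" unfolding t_def by simp
  have "t * \<bar>l\<bar> \<le> s/(2*(\<bar>l\<bar>+1)) * \<bar>l\<bar>" using t1 by (rule mult_right_mono) simp
  also have "\<dots> \<le> s/2" using s by (simp add: field_simps)
  finally have "t*\<bar>l\<bar> \<le> s/2" .
  moreover have "- (t*l) \<le> t*\<bar>l\<bar>" using t abs_ge_minus_self[of "t*l"] by (simp add: abs_mult)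
  ultimately have "- (t*l) \<le> s/2" by linarith
  then have pos: "s + t*l > 0" using s by simp
  have Ht: "s + t*l \<le> s * sqrt (1 + 2*t*a + t^2*b)" using H t by simp
  have q: "1 + 2*t*a + t^2*b \<ge> 0"
  proof (rule ccontr)
    assume "\<not> ?thesis"
    then have "sqrt (1 + 2*t*a + t^2*b) < 0" by simp
    then have "s * sqrt (1 + 2*t*a + t^2*b) < 0" using s by (simp add: mult_pos_neg)
    then show False using Ht pos by simp
  qed
  have "(s + t*l)^2 \<le> (s * sqrt (1 + 2*t*a + t^2*b))^2"
    using Ht pos by (intro power_mono) auto
  also have "\<dots> = s^2 * (1 + 2*t*a + t^2*b)" using q by (simp add: power_mult_distrib)
  finally have "(s + t*l)^2 \<le> s^2 * (1 + 2*t*a + t^2*b)" .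
  moreover have "(s + t*l)^2 = s^2 + 2*t*(s*l) + t^2*l^2" by (simp add: power2_eq_square algebra_simps)
  moreover have "s^2 * (1 + 2*t*a + t^2*b) = s^2 + 2*t*(s^2*a) + t^2*(s^2*b)" by (simp add: power2_eq_square algebra_simps)
  ultimately have "2*t*(s*l) - 2*t*(s^2*a) \<le> t^2*(s^2*b) - t^2*l^2" by linarith
  moreover have "2*t*(s*(l - s*a)) = 2*t*(s*l) - 2*t*(s^2*a)" by (simp add: power2_eq_square algebra_simps)
  moreover have "t^2 * (s^2*b - l^2) = t^2*(s^2*b) - t^2*l^2" by (simp add: algebra_simps)
  ultimately have "2*t*(s*(l - s*a)) \<le> t^2 * (s^2*b - l^2)" by linarith
  also have "\<dots> \<le> t^2 * C" unfolding C_def by (intro mult_left_mono) auto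
  finally have "2*t*(s*(l - s*a)) \<le> t * (t * C)" by (simp add: power2_eq_square)
  then have "2*(s*(l - s*a)) \<le> t * C" using t by simp
  moreover have "t * C \<le> s*(l - s*a)" using t2 C by (simp add: field_simps)
  moreover have "s*(l - s*a) > 0" using s e by simp
  ultimately show False by linarith
qed

lemma var_real:
  fixes s l a b :: real
  assumes s: "s > 0" and H: "\<And>t. s + t*l \<le> s * sqrt (1 + 2*t*a + t^2*b)"
  shows "l = s*a"
proof -
  have "l \<le> s*a" using var_half[OF s] H by blast
  moreover have "-l \<le> s*(-a)"
  proof (rule var_half[OF s])
    fix t :: real assume "t > 0"
    have "s + (-t)*l \<le> s * sqrt (1 + 2*(-t)*a + (-t)^2*b)" by (rule H)
    then show "s + t*(-l) \<le> s * sqrt (1 + 2*t*(-a) + t^2*b)" by simp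
  qed
  ultimately show ?thesis by simp
qed



locale rk =
  fixes X :: "'a set" and V :: "('a \<Rightarrow> real) set" and ip and k :: "'a \<Rightarrow> 'a \<Rightarrow> real"
  assumes RK: "rkhs X V ip k"
begin

lemma V_ext: "f \<in> V \<Longrightarrow> ext0 X f = f" using RK unfolding rkhs_def by blast
lemma V_zero: "(\<lambda>x. 0) \<in> V" using RK unfolding rkhs_def by blast
lemma V_add: "f \<in> V \<Longrightarrow> g \<in> V \<Longrightarrow> (\<lambda>x. f x + g x) \<in> V" using RK unfolding rkhs_def by blast
lemma V_scale: "f \<in> V \<Longrightarrow> (\<lambda>x. c * f x) \<in> V" using RK unfolding rkhs_def by blast
lemma ip_sym: "f \<in> V \<Longrightarrow> g \<in> V \<Longrightarrow> ip f g = ip g f" using RK unfolding rkhs_def by blast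
lemma ip_add: "f \<in> V \<Longrightarrow> g \<in> V \<Longrightarrow> h \<in> V \<Longrightarrow> ip (\<lambda>x. f x + g x) h = ip f h + ip g h"
  using RK unfolding rkhs_def by blast
lemma ip_scale: "f \<in> V \<Longrightarrow> g \<in> V \<Longrightarrow> ip (\<lambda>x. c * f x) g = c * ip f g"
  using RK unfolding rkhs_def by blast
lemma ip_pos: "f \<in> V \<Longrightarrow> ip f f \<ge> 0" using RK unfolding rkhs_def by blast
lemma ip_zero_imp: "f \<in> V \<Longrightarrow> ip f f = 0 \<Longrightarrow> f = (\<lambda>x. 0)" using RK unfolding rkhs_def by blast
lemma complete: "(\<And>n. s n \<in> V) \<Longrightarrow> (\<And>e. e > 0 \<Longrightarrow> \<exists>N. \<forall>m\<ge>N. \<forall>n\<ge>N. hnorm ip (\<lambda>x. s m x - s n x) < e)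
   \<Longrightarrow> \<exists>f \<in> V. (\<lambda>n. hnorm ip (\<lambda>x. s n x - f x)) \<longlonglongrightarrow> 0"
  using RK unfolding rkhs_def by blast
lemma kk_in: "y \<in> X \<Longrightarrow> ext0 X (\<lambda>x. k x y) \<in> V" using RK unfolding rkhs_def by blast
lemma repr: "y \<in> X \<Longrightarrow> f \<in> V \<Longrightarrow> ip f (ext0 X (\<lambda>x. k x y)) = f y" using RK unfolding rkhs_def by blast

lemma V_lin: "f \<in> V \<Longrightarrow> g \<in> V \<Longrightarrow> (\<lambda>x. a * f x + b * g x) \<in> V"
  using V_add[of "\<lambda>x. a * f x" "\<lambda>x. b * g x"] V_scale by blast

lemma ip_lin: "f \<in> V \<Longrightarrow> g \<in> V \<Longrightarrow> h \<in> V \<Longrightarrow> ip (\<lambda>x. a * f x + b * g x) h = a * ip f h + b * ip g h"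
  using ip_add[of "\<lambda>x. a * f x" "\<lambda>x. b * g x" h] V_scale ip_scale by simp

lemma ip_lin_r: "f \<in> V \<Longrightarrow> g \<in> V \<Longrightarrow> h \<in> V \<Longrightarrow> ip h (\<lambda>x. a * f x + b * g x) = a * ip h f + b * ip h g"
proof -
  assume f: "f \<in> V" and g: "g \<in> V" and h: "h \<in> V"
  have "ip h (\<lambda>x. a * f x + b * g x) = ip (\<lambda>x. a * f x + b * g x) h" using ip_sym[OF h V_lin[OF f g]] .
  also have "\<dots> = a * ip f h + b * ip g h" using ip_lin[OF f g h] .
  also have "\<dots> = a * ip h f + b * ip h g" using ip_sym[OF f h] ip_sym[OF g h] by simp
  finally show ?thesis .
qed

lemma ip_scale_r: "f \<in> V \<Longrightarrow> g \<in> V \<Longrightarrow> ip g (\<lambda>x. c * f x) = c * ip g f"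
proof -
  assume f: "f \<in> V" and g: "g \<in> V"
  have "ip g (\<lambda>x. c * f x) = ip (\<lambda>x. c * f x) g" using ip_sym[OF g V_scale[OF f]] .
  also have "\<dots> = c * ip f g" using ip_scale[OF f g] .
  also have "\<dots> = c * ip g f" using ip_sym[OF f g] by simp
  finally show ?thesis .
qed

lemma ip_add_r: "f \<in> V \<Longrightarrow> g \<in> V \<Longrightarrow> h \<in> V \<Longrightarrow> ip h (\<lambda>x. f x + g x) = ip h f + ip h g"
proof -
  assume f: "f \<in> V" and g: "g \<in> V" and h: "h \<in> V"
  have "ip h (\<lambda>x. f x + g x) = ip (\<lambda>x. f x + g x) h" using ip_sym[OF h V_add[OF f g]] .
  also have "\<dots> = ip f h + ip g h" using ip_add[OF f g h] .
  also have "\<dots> = ip h f + ip h g" using ip_sym[OF f h] ip_sym[OF g h] by simp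
  finally show ?thesis .
qed

lemma ip_zero_l: "g \<in> V \<Longrightarrow> ip (\<lambda>x. 0) g = 0"
  using ip_scale[OF V_zero, of g 0] by simp

lemma ip_zero_r: "g \<in> V \<Longrightarrow> ip g (\<lambda>x. 0) = 0"
  using ip_zero_l ip_sym[OF _ V_zero] by simp

lemma quad: "f \<in> V \<Longrightarrow> g \<in> V \<Longrightarrow>
  ip (\<lambda>x. a * f x + b * g x) (\<lambda>x. a * f x + b * g x) = a^2 * ip f f + 2*a*b * ip f g + b^2 * ip g g"
proof -
  assume f: "f \<in> V" and g: "g \<in> V"
  have L: "(\<lambda>x. a * f x + b * g x) \<in> V" using V_lin f g .
  have "ip (\<lambda>x. a * f x + b * g x) (\<lambda>x. a * f x + b * g x)
     = a * ip f (\<lambda>x. a * f x + b * g x) + b * ip g (\<lambda>x. a * f x + b * g x)"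
    using ip_lin[OF f g L] .
  also have "\<dots> = a * (a * ip f f + b * ip f g) + b * (a * ip g f + b * ip g g)"
    using ip_lin_r[OF f g] f g by simp
  also have "\<dots> = a^2 * ip f f + 2*a*b * ip f g + b^2 * ip g g"
    using ip_sym[OF f g] by (simp add: algebra_simps power2_eq_square)
  finally show ?thesis .
qed

lemma CS: "f \<in> V \<Longrightarrow> g \<in> V \<Longrightarrow> (ip f g)^2 \<le> ip f f * ip g g"
proof -
  assume f: "f \<in> V" and g: "g \<in> V"
  show ?thesis
  proof (cases "ip g g = 0")
    case True
    then have "g = (\<lambda>x. 0)" using ip_zero_imp g by blast
    then show ?thesis using ip_zero_r f ip_zero_r[OF V_zero] by simp
  next
    case False
    then have gp: "ip g g > 0" using ip_pos[OF g] by simp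
    define t where "t = ip f g / ip g g"
    have "0 \<le> ip (\<lambda>x. 1 * f x + (-t) * g x) (\<lambda>x. 1 * f x + (-t) * g x)"
      using ip_pos V_lin f g by blast
    also have "\<dots> = ip f f - 2 * t * ip f g + t^2 * ip g g" using quad[OF f g, of 1 "-t"] by simp
    also have "\<dots> = ip f f - (ip f g)^2 / ip g g" using gp unfolding t_def
      by (simp add: field_simps power2_eq_square)
    finally have "(ip f g)^2 / ip g g \<le> ip f f" by simp
    then show ?thesis using gp by (simp add: field_simps)
  qed
qed

lemma CS_abs: "f \<in> V \<Longrightarrow> g \<in> V \<Longrightarrow> \<bar>ip f g\<bar> \<le> hnorm ip f * hnorm ip g"
proof -
  assume f: "f \<in> V" and g: "g \<in> V"
  have "\<bar>ip f g\<bar> = sqrt ((ip f g)^2)" by simp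
  also have "\<dots> \<le> sqrt (ip f f * ip g g)" using CS[OF f g] real_sqrt_le_mono by blast
  also have "\<dots> = hnorm ip f * hnorm ip g" unfolding hnorm_def using real_sqrt_mult by simp
  finally show ?thesis .
qed

lemma hnorm_nonneg: "f \<in> V \<Longrightarrow> hnorm ip f \<ge> 0" unfolding hnorm_def using ip_pos[of f] by simp
lemma hnorm_sq: "f \<in> V \<Longrightarrow> (hnorm ip f)^2 = ip f f" unfolding hnorm_def using ip_pos[of f] by simp

lemma tri: "f \<in> V \<Longrightarrow> g \<in> V \<Longrightarrow> hnorm ip (\<lambda>x. f x + g x) \<le> hnorm ip f + hnorm ip g"
proof -
  assume f: "f \<in> V" and g: "g \<in> V"
  have e: "(\<lambda>x. f x + g x) = (\<lambda>x. 1 * f x + 1 * g x)" by simp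
  have "ip (\<lambda>x. f x + g x) (\<lambda>x. f x + g x) = ip f f + 2 * ip f g + ip g g"
    unfolding e quad[OF f g] by simp
  also have "\<dots> \<le> (hnorm ip f)^2 + 2 * (hnorm ip f * hnorm ip g) + (hnorm ip g)^2"
    using CS_abs[OF f g] hnorm_sq f g by simp
  also have "\<dots> = (hnorm ip f + hnorm ip g)^2" by (simp add: power2_eq_square algebra_simps)
  finally have "(hnorm ip (\<lambda>x. f x + g x))^2 \<le> (hnorm ip f + hnorm ip g)^2"
    using hnorm_sq[OF V_add[OF f g]] by simp
  then show ?thesis by (rule power2_le_imp_le) (simp add: hnorm_nonneg f g add_nonneg_nonneg)
qed

end


context rk begin

lemma hn_diff: "f \<in> V \<Longrightarrow> g \<in> V \<Longrightarrow> hnorm ip f \<le> hnorm ip g + hnorm ip (\<lambda>x. f x - g x)"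
proof -
  assume f: "f \<in> V" and g: "g \<in> V"
  have d: "(\<lambda>x. f x - g x) \<in> V" using V_lin[OF f g, of 1 "-1"] by simp
  have "hnorm ip (\<lambda>x. g x + (f x - g x)) \<le> hnorm ip g + hnorm ip (\<lambda>x. f x - g x)"
    using tri[OF g d] by simp
  then show ?thesis by simp
qed

lemma hn_sym: "f \<in> V \<Longrightarrow> g \<in> V \<Longrightarrow> hnorm ip (\<lambda>x. f x - g x) = hnorm ip (\<lambda>x. g x - f x)"
proof -
  assume f: "f \<in> V" and g: "g \<in> V"
  have e1: "(\<lambda>x. f x - g x) = (\<lambda>x. 1 * f x + (-1) * g x)" by simp
  have e2: "(\<lambda>x. g x - f x) = (\<lambda>x. (-1) * f x + 1 * g x)" by simp
  show ?thesis unfolding hnorm_def e1 e2 quad[OF f g] by simp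
qed

lemma hn_lip: "f \<in> V \<Longrightarrow> g \<in> V \<Longrightarrow> \<bar>hnorm ip f - hnorm ip g\<bar> \<le> hnorm ip (\<lambda>x. f x - g x)"
  using hn_diff[of f g] hn_diff[of g f] hn_sym[of f g] by (simp add: abs_le_iff)

lemma riesz_rel:
  assumes RV: "\<And>g l. (g,l) \<in> R \<Longrightarrow> g \<in> V"
    and R0: "((\<lambda>x. 0), 0) \<in> R"
    and Radd: "\<And>g1 l1 g2 l2. (g1,l1) \<in> R \<Longrightarrow> (g2,l2) \<in> R \<Longrightarrow> ((\<lambda>x. g1 x + g2 x), l1 + l2) \<in> R"
    and Rsc: "\<And>g l c. (g,l) \<in> R \<Longrightarrow> ((\<lambda>x. c * g x), c * l) \<in> R"
    and Rb: "\<And>g l. (g,l) \<in> R \<Longrightarrow> l^2 \<le> ip g g"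
  shows "\<exists>h\<in>V. ip h h \<le> 1 \<and> (\<forall>g l. (g,l) \<in> R \<longrightarrow> ip h g = l)"
proof -
  define A where "A = {l. \<exists>g. (g,l) \<in> R \<and> ip g g \<le> 1}"
  have A0: "0 \<in> A" unfolding A_def using R0 ip_zero_l V_zero by auto
  have A1: "l \<le> 1" if lA: "l \<in> A" for l
  proof -
    obtain g where g: "(g,l) \<in> R" "ip g g \<le> 1" using lA unfolding A_def by auto
    have "l^2 \<le> 1" using Rb[OF g(1)] g(2) by simp
    then have "\<bar>l\<bar> \<le> 1" by (simp add: abs_square_le_1)
    then show ?thesis by simp
  qed
  have Ane: "A \<noteq> {}" using A0 by auto
  have Abdd: "bdd_above A" by (rule bdd_aboveI[of _ 1]) (rule A1)
  define sv where "sv = Sup A"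
  have s0: "sv \<ge> 0" unfolding sv_def using cSup_upper[OF A0 Abdd] .
  have s1: "sv \<le> 1" unfolding sv_def using cSup_least[OF Ane] A1 by blast
  have key: "l \<le> sv * hnorm ip g" if gl: "(g,l) \<in> R" for g l
  proof (cases "ip g g = 0")
    case True
    then have "l^2 \<le> 0" using Rb[OF gl] by simp
    then have "l = 0" by simp
    then show ?thesis using s0 hnorm_nonneg[OF RV[OF gl]] by simp
  next
    case False
    have gV: "g \<in> V" using RV[OF gl] .
    define n where "n = hnorm ip g"
    have n: "n > 0" using False ip_pos[OF gV] unfolding n_def hnorm_def by simp
    have n2: "n^2 = ip g g" unfolding n_def using hnorm_sq[OF gV] .
    have R1: "((\<lambda>x. (1/n) * g x), (1/n) * l) \<in> R" using Rsc[OF gl] .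
    have eq1: "ip (\<lambda>x. (1/n) * g x) (\<lambda>x. (1/n) * g x) = (1/n) * ip g (\<lambda>x. (1/n) * g x)"
      by (rule ip_scale[OF gV V_scale[OF gV]])
    have eq2: "ip g (\<lambda>x. (1/n) * g x) = (1/n) * ip g g" by (rule ip_scale_r[OF gV gV])
    have "ip (\<lambda>x. (1/n) * g x) (\<lambda>x. (1/n) * g x) = (1/n) * ((1/n) * ip g g)"
      by (simp only: eq1 eq2)
    also have "\<dots> = 1" using n n2[symmetric] by (simp add: power2_eq_square)
    finally have "(1/n) * l \<in> A" unfolding A_def using R1 by auto
    then have "(1/n) * l \<le> sv" unfolding sv_def using cSup_upper[OF _ Abdd] by blast
    then show ?thesis using n unfolding n_def[symmetric] by (simp add: field_simps)
  qed
  show ?thesis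
  proof (cases "sv = 0")
    case True
    show ?thesis
    proof (intro bexI[of _ "\<lambda>x. 0"] conjI allI impI)
      show "(\<lambda>x. 0) \<in> V" by (rule V_zero)
      show "ip (\<lambda>x. 0) (\<lambda>x. 0) \<le> 1" using ip_zero_l[OF V_zero] by simp
      fix g l assume gl: "(g,l) \<in> R"
      have "l \<le> 0" using key[OF gl] True by simp
      moreover have "-1 * l \<le> 0" using key[OF Rsc[OF gl, of "-1"]] True by simp
      ultimately have "l = 0" by simp
      then show "ip (\<lambda>x. 0) g = l" using ip_zero_l[OF RV[OF gl]] by simp
    qed
  next
    case False
    then have sp: "sv > 0" using s0 by simp
    have "\<forall>n. \<exists>gl. gl \<in> R \<and> ip (fst gl) (fst gl) \<le> 1 \<and> sv - inverse (real (Suc n)) < snd gl"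
    proof
      fix n
      have "sv - inverse (real (Suc n)) < sv" by simp
      then obtain l where lA: "l \<in> A" and ll: "sv - inverse (real (Suc n)) < l"
        unfolding sv_def using less_cSup_iff[OF Ane Abdd] by blast
      then obtain g where g: "(g,l) \<in> R" "ip g g \<le> 1" unfolding A_def by blast
      show "\<exists>gl. gl \<in> R \<and> ip (fst gl) (fst gl) \<le> 1 \<and> sv - inverse (real (Suc n)) < snd gl"
        using g ll by (intro exI[of _ "(g,l)"]) simp
    qed
    from choice[OF this] obtain P where P: "\<forall>n. P n \<in> R \<and> ip (fst (P n)) (fst (P n)) \<le> 1 \<and> sv - inverse (real (Suc n)) < snd (P n)"
      by blast
    define G where "G n = fst (P n)" for n
    define Lv where "Lv n = snd (P n)" for n
    have GR: "(G n, Lv n) \<in> R" for n unfolding G_def Lv_def using P by simp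
    have GV: "G n \<in> V" for n using RV[OF GR] .
    have G1: "ip (G n) (G n) \<le> 1" for n unfolding G_def using P by simp
    have Llow: "sv - inverse (real (Suc n)) < Lv n" for n unfolding Lv_def using P by simp
    have Lup: "Lv n \<le> sv" for n
    proof -
      have "Lv n \<in> A" unfolding A_def using GR G1 by auto
      then show ?thesis unfolding sv_def using cSup_upper[OF _ Abdd] by blast
    qed
    have Llim: "Lv \<longlonglongrightarrow> sv"
    proof (rule tendsto_sandwich[OF _ _ LIMSEQ_inverse_real_of_nat_add_minus[of sv] tendsto_const])
      show "\<forall>\<^sub>F n in sequentially. sv + - inverse (real (Suc n)) \<le> Lv n"
        using Llow by (simp add: less_imp_le)
      show "\<forall>\<^sub>F n in sequentially. Lv n \<le> sv" using Lup by simp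
    qed
    have cauchy: "\<exists>N. \<forall>m\<ge>N. \<forall>n\<ge>N. hnorm ip (\<lambda>x. G m x - G n x) < e" if e: "e > 0" for e
    proof -
      have "min sv (e^2 * sv / 8) > 0" using sp e by simp
      then obtain N where N: "inverse (real (Suc N)) < min sv (e^2 * sv / 8)"
        using reals_Archimedean by blast
      define eps where "eps = inverse (real (Suc N))"
      have eps0: "eps > 0" unfolding eps_def by simp
      have eps1: "eps < sv" "eps < e^2 * sv / 8" using N unfolding eps_def by auto
      show ?thesis
      proof (intro exI allI impI)
        fix m n assume m: "m \<ge> N" and n: "n \<ge> N"
        have im: "inverse (real (Suc m)) \<le> eps" unfolding eps_def using m
          by (simp add: le_imp_inverse_le)
        have inn: "inverse (real (Suc n)) \<le> eps" unfolding eps_def using n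
          by (simp add: le_imp_inverse_le)
        have lsum: "Lv m + Lv n > 2* sv - 2*eps" using Llow[of m] Llow[of n] im inn by linarith
        have ksum: "Lv m + Lv n \<le> sv * hnorm ip (\<lambda>x. G m x + G n x)"
          using key[OF Radd[OF GR[of m] GR[of n]]] .
        have SV: "(\<lambda>x. G m x + G n x) \<in> V" using V_add GV by blast
        have "2* sv - 2*eps \<le> sv * hnorm ip (\<lambda>x. G m x + G n x)" using lsum ksum by linarith
        then have "2 - 2*eps/sv \<le> hnorm ip (\<lambda>x. G m x + G n x)" using sp
          by (simp add: field_simps)
        moreover have "2 - 2*eps/sv \<ge> 0" using eps1 sp by (simp add: field_simps)
        ultimately have "(2 - 2*eps/sv)^2 \<le> (hnorm ip (\<lambda>x. G m x + G n x))^2"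
          by (intro power_mono) auto
        then have Ssq: "(2 - 2*eps/sv)^2 \<le> ip (\<lambda>x. G m x + G n x) (\<lambda>x. G m x + G n x)"
          using hnorm_sq[OF SV] by simp
        have "(2 - 2*eps/sv)^2 = 4 - 8*eps/sv + (2*eps/sv)^2" by (simp add: power2_eq_square algebra_simps)
        then have Ssq2: "4 - 8*eps/sv \<le> ip (\<lambda>x. G m x + G n x) (\<lambda>x. G m x + G n x)"
          using Ssq zero_le_power2[of "2*eps/sv"] by linarith
        have e1: "(\<lambda>x. G m x - G n x) = (\<lambda>x. 1 * G m x + (-1) * G n x)" by simp
        have e2: "(\<lambda>x. G m x + G n x) = (\<lambda>x. 1 * G m x + 1 * G n x)" by simp
        have par: "ip (\<lambda>x. G m x - G n x) (\<lambda>x. G m x - G n x)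
           = 2 * ip (G m) (G m) + 2 * ip (G n) (G n) - ip (\<lambda>x. G m x + G n x) (\<lambda>x. G m x + G n x)"
          unfolding e1 e2 quad[OF GV GV] by simp
        have "ip (\<lambda>x. G m x - G n x) (\<lambda>x. G m x - G n x) \<le> 8*eps/sv"
          using par Ssq2 G1[of m] G1[of n] by linarith
        also have "\<dots> < e^2" using eps1 sp by (simp add: field_simps)
        finally have lt: "ip (\<lambda>x. G m x - G n x) (\<lambda>x. G m x - G n x) < e^2" .
        show "hnorm ip (\<lambda>x. G m x - G n x) < e"
          unfolding hnorm_def using lt e real_sqrt_less_iff[of _ "e^2"] by simp
      qed
    qed
    obtain h where hV: "h \<in> V" and hlim: "(\<lambda>n. hnorm ip (\<lambda>x. G n x - h x)) \<longlonglongrightarrow> 0"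
      using complete[of G, OF GV cauchy] by blast
    have hn1: "hnorm ip h \<le> 1"
    proof -
      have "(\<lambda>n. 1 + hnorm ip (\<lambda>x. G n x - h x)) \<longlonglongrightarrow> 1 + 0"
        by (intro tendsto_add tendsto_const hlim)
      moreover have "\<forall>n. hnorm ip h \<le> 1 + hnorm ip (\<lambda>x. G n x - h x)"
      proof
        fix n
        have "hnorm ip (G n) \<le> 1" using G1[of n] unfolding hnorm_def by simp
        then show "hnorm ip h \<le> 1 + hnorm ip (\<lambda>x. G n x - h x)"
          using hn_diff[OF hV GV[of n]] hn_sym[OF hV GV[of n]] by simp
      qed
      ultimately have "hnorm ip h \<le> 1 + 0" using LIMSEQ_le_const by blast
      then show ?thesis by simp
    qed
    have hh1: "ip h h \<le> 1"
    proof -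
      have "(hnorm ip h)^2 \<le> 1" using hn1 hnorm_nonneg[OF hV] by (simp add: power_le_one)
      then show ?thesis using hnorm_sq[OF hV] by simp
    qed
    have var: "l = sv * ip h g" if gl: "(g,l) \<in> R" for g l
    proof (rule var_real[OF sp])
      fix t :: real
      have gV: "g \<in> V" using RV[OF gl] .
      have tgV: "(\<lambda>x. t * g x) \<in> V" using V_scale[OF gV] .
      have htV: "(\<lambda>x. h x + t * g x) \<in> V" using V_add[OF hV tgV] .
      have GtV: "(\<lambda>x. G n x + t * g x) \<in> V" for n using V_add[OF GV tgV] .
      have ineq: "Lv n + t * l \<le> sv * hnorm ip (\<lambda>x. G n x + t * g x)" for n
        using key[OF Radd[OF GR[of n] Rsc[OF gl, of t]]] .
      have conv: "(\<lambda>n. hnorm ip (\<lambda>x. G n x + t * g x)) \<longlonglongrightarrow> hnorm ip (\<lambda>x. h x + t * g x)"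
      proof (rule LIM_zero_cancel, rule Lim_null_comparison[OF _ hlim])
        show "\<forall>\<^sub>F n in sequentially. norm (hnorm ip (\<lambda>x. G n x + t * g x) - hnorm ip (\<lambda>x. h x + t * g x))
             \<le> hnorm ip (\<lambda>x. G n x - h x)"
        proof (rule always_eventually, rule allI)
          fix n
          have "(\<lambda>x. (G n x + t * g x) - (h x + t * g x)) = (\<lambda>x. G n x - h x)" by auto
          then show "norm (hnorm ip (\<lambda>x. G n x + t * g x) - hnorm ip (\<lambda>x. h x + t * g x))
             \<le> hnorm ip (\<lambda>x. G n x - h x)"
            using hn_lip[OF GtV[of n] htV] by simp
        qed
      qed
      have lim1: "(\<lambda>n. Lv n + t * l) \<longlonglongrightarrow> sv + t * l" by (intro tendsto_add Llim tendsto_const)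
      have lim2: "(\<lambda>n. sv * hnorm ip (\<lambda>x. G n x + t * g x)) \<longlonglongrightarrow> sv * hnorm ip (\<lambda>x. h x + t * g x)"
        by (intro tendsto_mult tendsto_const conv)
      have A: "sv + t * l \<le> sv * hnorm ip (\<lambda>x. h x + t * g x)"
        using LIMSEQ_le[OF lim1 lim2] ineq by blast
      have e: "(\<lambda>x. h x + t * g x) = (\<lambda>x. 1 * h x + t * g x)" by simp
      have Q: "ip (\<lambda>x. h x + t * g x) (\<lambda>x. h x + t * g x) = ip h h + 2*t*ip h g + t^2 * ip g g"
        unfolding e quad[OF hV gV] by simp
      have "hnorm ip (\<lambda>x. h x + t * g x) \<le> sqrt (1 + 2*t*ip h g + t^2 * ip g g)"
        unfolding hnorm_def Q using hh1 by simp
      then have "sv * hnorm ip (\<lambda>x. h x + t * g x) \<le> sv * sqrt (1 + 2*t*ip h g + t^2 * ip g g)"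
        using sp by simp
      then show "sv + t * l \<le> sv * sqrt (1 + 2*t*ip h g + t^2 * ip g g)" using A by linarith
    qed
    show ?thesis
    proof (intro bexI[of _ "\<lambda>x. sv * h x"] conjI allI impI)
      show "(\<lambda>x. sv * h x) \<in> V" using V_scale[OF hV] .
      have eq1: "ip (\<lambda>x. sv * h x) (\<lambda>x. sv * h x) = sv * ip h (\<lambda>x. sv * h x)"
        by (rule ip_scale[OF hV V_scale[OF hV]])
      have eq2: "ip h (\<lambda>x. sv * h x) = sv * ip h h" by (rule ip_scale_r[OF hV hV])
      have "ip (\<lambda>x. sv * h x) (\<lambda>x. sv * h x) = sv * (sv * ip h h)"
        by (simp only: eq1 eq2)
      also have "\<dots> \<le> 1"
      proof -
        have a: "sv * ip h h \<le> 1" using mult_le_one[OF s1 ip_pos[OF hV] hh1] .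
        have "0 \<le> sv * ip h h" using s0 ip_pos[OF hV] by simp
        then show ?thesis using mult_le_one[OF s1 _ a] by simp
      qed
      finally show "ip (\<lambda>x. sv * h x) (\<lambda>x. sv * h x) \<le> 1" .
      fix g l assume gl: "(g,l) \<in> R"
      show "ip (\<lambda>x. sv * h x) g = l" using ip_scale[OF hV RV[OF gl]] var[OF gl] by simp
    qed
  qed
qed

end


inductive_set Rset :: "'a set \<Rightarrow> ('a \<Rightarrow> 'a \<Rightarrow> real) \<Rightarrow> ('a \<Rightarrow> real) \<Rightarrow> (('a \<Rightarrow> real) \<times> real) set"
  for X k f where
  R0: "((\<lambda>x. 0), 0) \<in> Rset X k f"
| Rk: "y \<in> X \<Longrightarrow> (ext0 X (\<lambda>x. k x y), f y) \<in> Rset X k f"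
| Radd: "(g1,l1) \<in> Rset X k f \<Longrightarrow> (g2,l2) \<in> Rset X k f \<Longrightarrow> ((\<lambda>x. g1 x + g2 x), l1 + l2) \<in> Rset X k f"
| Rsc: "(g,l) \<in> Rset X k f \<Longrightarrow> ((\<lambda>x. c * g x), c * l) \<in> Rset X k f"

locale setting = rk "space M" V ip k for M :: "'a measure" and V ip k +
  fixes \<mu> :: "'g::topological_group_add measure" and T :: "'g \<Rightarrow> 'a \<Rightarrow> 'a" and \<gamma> :: "'a \<Rightarrow> real"
  assumes prob: "prob_space \<mu>" and sets_mu: "sets \<mu> = sets borel"
    and action: "measurable_action M T"
    and bm: "\<forall>f\<in>V. f \<in> borel_measurable M \<and> (\<exists>B. \<forall>x\<in>space M. \<bar>f x\<bar> \<le> B)"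
    and inv: "\<forall>\<sigma>. \<forall>x\<in>space M. \<forall>y\<in>space M. k (T \<sigma> x) (T \<sigma> y) = k x y"
    and gV: "\<gamma> \<in> V" and g1: "ip \<gamma> \<gamma> \<le> 1"
begin

definition kk where "kk y = ext0 (space M) (\<lambda>x. k x y)"
definition Phi where "Phi \<sigma> g = ext0 (space M) (\<lambda>x. g (T (-\<sigma>) x))"
definition ff where "ff = symmetrize \<mu> M T \<gamma>"

lemma Tmeas: "(\<lambda>(s, x). T s x) \<in> measurable (borel \<Otimes>\<^sub>M M) M"
  using action unfolding measurable_action_def by blast
lemma T0: "x \<in> space M \<Longrightarrow> T 0 x = x"
  using action unfolding measurable_action_def by blast
lemma Tadd: "x \<in> space M \<Longrightarrow> T (s + t) x = T s (T t x)"
  using action unfolding measurable_action_def by blast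

lemma Tin: "x \<in> space M \<Longrightarrow> T \<sigma> x \<in> space M"
proof -
  assume x: "x \<in> space M"
  have "(\<sigma>, x) \<in> space (borel \<Otimes>\<^sub>M M)" by (simp add: space_pair_measure x)
  from measurable_space[OF Tmeas this] show ?thesis by simp
qed

lemma Tinv1: "x \<in> space M \<Longrightarrow> T \<sigma> (T (-\<sigma>) x) = x"
  using Tadd[of x \<sigma> "-\<sigma>"] T0 by simp

lemma Tinv2: "x \<in> space M \<Longrightarrow> T (-\<sigma>) (T \<sigma> x) = x"
  using Tadd[of x "-\<sigma>" \<sigma>] T0 by simp

lemma kkV: "y \<in> space M \<Longrightarrow> kk y \<in> V" unfolding kk_def by (rule kk_in)

lemma Phi_kk: "y \<in> space M \<Longrightarrow> Phi \<sigma> (kk y) = kk (T \<sigma> y)"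
proof
  fix x assume y: "y \<in> space M"
  show "Phi \<sigma> (kk y) x = kk (T \<sigma> y) x"
  proof (cases "x \<in> space M")
    case True
    have tx: "T (-\<sigma>) x \<in> space M" using Tin True .
    have "Phi \<sigma> (kk y) x = k (T (-\<sigma>) x) y" unfolding Phi_def kk_def ext0_def using True tx by simp
    also have "\<dots> = k (T \<sigma> (T (-\<sigma>) x)) (T \<sigma> y)" using inv tx y by simp
    also have "\<dots> = k x (T \<sigma> y)" using Tinv1 True by simp
    finally show ?thesis unfolding kk_def ext0_def using True by simp
  next
    case False
    then show ?thesis unfolding Phi_def kk_def ext0_def by simp
  qed
qed

lemma Phi_add: "Phi \<sigma> (\<lambda>x. g1 x + g2 x) = (\<lambda>x. Phi \<sigma> g1 x + Phi \<sigma> g2 x)"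
  unfolding Phi_def ext0_def by auto

lemma Phi_sc: "Phi \<sigma> (\<lambda>x. c * g x) = (\<lambda>x. c * Phi \<sigma> g x)"
  unfolding Phi_def ext0_def by auto

lemma Phi_0: "Phi \<sigma> (\<lambda>x. 0) = (\<lambda>x. 0)"
  unfolding Phi_def ext0_def by auto

lemma Tmeas_s: "y \<in> space M \<Longrightarrow> (\<lambda>\<sigma>. T \<sigma> y) \<in> measurable \<mu> M"
proof -
  assume y: "y \<in> space M"
  have "(\<lambda>\<sigma>. (\<sigma>, y)) \<in> measurable borel (borel \<Otimes>\<^sub>M M)"
    by (rule measurable_Pair[OF measurable_ident_sets[OF refl] measurable_const[OF y]])
  from measurable_compose[OF this Tmeas] have "(\<lambda>\<sigma>. T \<sigma> y) \<in> measurable borel M" by simp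
  moreover have "measurable \<mu> M = measurable borel M" by (rule measurable_cong_sets[OF sets_mu refl])
  ultimately show ?thesis by simp
qed

abbreviation R where "R \<equiv> Rset (space M) k ff"

lemma inv_R: "(g,l) \<in> R \<Longrightarrow> g \<in> V \<and> (\<forall>\<sigma>. Phi \<sigma> g \<in> V) \<and> integrable \<mu> (\<lambda>\<sigma>. ip \<gamma> (Phi \<sigma> g))
   \<and> l = (\<integral>\<sigma>. ip \<gamma> (Phi \<sigma> g) \<partial>\<mu>)"
proof (induct rule: Rset.induct)
  case R0
  then show ?case using V_zero Phi_0 ip_zero_r[OF gV] by simp
next
  case (Rk y)
  interpret prob_space \<mu> by (rule prob)
  have e: "ip \<gamma> (Phi \<sigma> (ext0 (space M) (\<lambda>x. k x y))) = \<gamma> (T \<sigma> y)" for \<sigma>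
    using Phi_kk[OF Rk] repr[OF Tin[OF Rk] gV] unfolding kk_def by simp
  have ms: "(\<lambda>\<sigma>. \<gamma> (T \<sigma> y)) \<in> borel_measurable \<mu>"
    using measurable_compose[OF Tmeas_s[OF Rk]] bm gV by blast
  obtain B where B: "\<forall>x\<in>space M. \<bar>\<gamma> x\<bar> \<le> B" using bm gV by blast
  have int: "integrable \<mu> (\<lambda>\<sigma>. \<gamma> (T \<sigma> y))"
    by (rule integrable_const_bound[where B=B]) (use B Tin[OF Rk] ms in auto)
  have "ff y = (\<integral>\<sigma>. \<gamma> (T \<sigma> y) \<partial>\<mu>)" unfolding ff_def symmetrize_def ext0_def using Rk by simp
  then show ?case using e int Phi_kk[OF Rk] kkV[OF Tin[OF Rk]] kk_in[OF Rk] unfolding kk_def by simp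
next
  case (Radd g1 l1 g2 l2)
  have V1: "g1 \<in> V" "\<And>\<sigma>. Phi \<sigma> g1 \<in> V" using Radd by auto
  have V2: "g2 \<in> V" "\<And>\<sigma>. Phi \<sigma> g2 \<in> V" using Radd by auto
  have e: "ip \<gamma> (Phi \<sigma> (\<lambda>x. g1 x + g2 x)) = ip \<gamma> (Phi \<sigma> g1) + ip \<gamma> (Phi \<sigma> g2)" for \<sigma>
    unfolding Phi_add using ip_add_r[OF V1(2) V2(2) gV] .
  have i1: "integrable \<mu> (\<lambda>\<sigma>. ip \<gamma> (Phi \<sigma> g1))" and i2: "integrable \<mu> (\<lambda>\<sigma>. ip \<gamma> (Phi \<sigma> g2))"
    using Radd by auto
  show ?case
    using V_add[OF V1(1) V2(1)] V_add[OF V1(2) V2(2)] Phi_add e Bochner_Integration.integrable_add[OF i1 i2]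
      Bochner_Integration.integral_add[OF i1 i2] Radd by simp
next
  case (Rsc g l c)
  have V1: "g \<in> V" "\<And>\<sigma>. Phi \<sigma> g \<in> V" using Rsc by auto
  have e: "ip \<gamma> (Phi \<sigma> (\<lambda>x. c * g x)) = c * ip \<gamma> (Phi \<sigma> g)" for \<sigma>
    unfolding Phi_sc using ip_scale_r[OF V1(2) gV] .
  have i1: "integrable \<mu> (\<lambda>\<sigma>. ip \<gamma> (Phi \<sigma> g))" using Rsc by auto
  show ?case
    using V_scale[OF V1(1)] V_scale[OF V1(2)] Phi_sc e integrable_mult_right[OF i1, of c] Rsc by simp
qed

lemma pair_R: "(g1,l1) \<in> R \<Longrightarrow> (g2,l2) \<in> R \<Longrightarrow> ip (Phi \<sigma> g1) (Phi \<sigma> g2) = ip g1 g2"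
proof (induct rule: Rset.induct)
  case R0
  then show ?case using Phi_0 ip_zero_l inv_R by simp
next
  case (Rk y)
  have g2: "g2 \<in> V" "Phi \<sigma> g2 \<in> V" using inv_R[OF Rk(2)] by auto
  have ty: "T \<sigma> y \<in> space M" using Tin Rk(1) .
  have "ip (Phi \<sigma> (kk y)) (Phi \<sigma> g2) = ip (Phi \<sigma> g2) (kk (T \<sigma> y))"
    using Phi_kk[OF Rk(1)] ip_sym[OF kkV[OF ty] g2(2)] by simp
  also have "\<dots> = Phi \<sigma> g2 (T \<sigma> y)" using repr[OF ty g2(2)] unfolding kk_def .
  also have "\<dots> = g2 y" unfolding Phi_def ext0_def using ty Tinv2[OF Rk(1)] by simp
  also have "\<dots> = ip g2 (kk y)" using repr[OF Rk(1) g2(1)] unfolding kk_def by simp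
  also have "\<dots> = ip (kk y) g2" using ip_sym[OF kkV[OF Rk(1)] g2(1)] by simp
  finally show ?case unfolding kk_def .
next
  case (Radd g1 l1 g1' l1')
  have g2: "g2 \<in> V" "Phi \<sigma> g2 \<in> V" using inv_R[OF Radd(5)] by auto
  have a: "g1 \<in> V" "Phi \<sigma> g1 \<in> V" using inv_R[OF Radd(1)] by auto
  have b: "g1' \<in> V" "Phi \<sigma> g1' \<in> V" using inv_R[OF Radd(3)] by auto
  show ?case unfolding Phi_add using ip_add[OF a(2) b(2) g2(2)] ip_add[OF a(1) b(1) g2(1)] Radd by simp
next
  case (Rsc g l c)
  have g2: "g2 \<in> V" "Phi \<sigma> g2 \<in> V" using inv_R[OF Rsc(3)] by auto
  have a: "g \<in> V" "Phi \<sigma> g \<in> V" using inv_R[OF Rsc(1)] by auto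
  show ?case unfolding Phi_sc using ip_scale[OF a(2) g2(2)] ip_scale[OF a(1) g2(1)] Rsc by simp
qed

lemma bound_R: "(g,l) \<in> R \<Longrightarrow> l^2 \<le> ip g g"
proof -
  assume gl: "(g,l) \<in> R"
  interpret prob_space \<mu> by (rule prob)
  have I: "g \<in> V" "\<And>\<sigma>. Phi \<sigma> g \<in> V" "integrable \<mu> (\<lambda>\<sigma>. ip \<gamma> (Phi \<sigma> g))"
     "l = (\<integral>\<sigma>. ip \<gamma> (Phi \<sigma> g) \<partial>\<mu>)" using inv_R[OF gl] by auto
  have hg: "hnorm ip \<gamma> \<le> 1" unfolding hnorm_def using g1 by simp
  have pt: "\<bar>ip \<gamma> (Phi \<sigma> g)\<bar> \<le> hnorm ip g" for \<sigma>
  proof -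
    have "\<bar>ip \<gamma> (Phi \<sigma> g)\<bar> \<le> hnorm ip \<gamma> * hnorm ip (Phi \<sigma> g)" using CS_abs[OF gV I(2)] .
    also have "\<dots> \<le> 1 * hnorm ip (Phi \<sigma> g)"
      using hg hnorm_nonneg[OF I(2)] by (intro mult_right_mono) auto
    also have "hnorm ip (Phi \<sigma> g) = hnorm ip g" unfolding hnorm_def using pair_R[OF gl gl] by simp
    finally show ?thesis by simp
  qed
  have ic: "integrable \<mu> (\<lambda>\<sigma>. hnorm ip g)" by simp
  have "\<bar>l\<bar> \<le> (\<integral>\<sigma>. hnorm ip g \<partial>\<mu>)"
  proof -
    have "norm (\<integral>\<sigma>. ip \<gamma> (Phi \<sigma> g) \<partial>\<mu>) \<le> (\<integral>\<sigma>. norm (ip \<gamma> (Phi \<sigma> g)) \<partial>\<mu>)"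
      by (rule integral_norm_bound)
    also have "\<dots> \<le> (\<integral>\<sigma>. hnorm ip g \<partial>\<mu>)"
      by (rule integral_mono[OF integrable_norm[OF I(3)] ic]) (simp add: pt)
    finally show ?thesis unfolding I(4) by simp
  qed
  also have "\<dots> = hnorm ip g" using prob_space by simp
  finally have "\<bar>l\<bar> \<le> hnorm ip g" .
  then have "\<bar>l\<bar>^2 \<le> (hnorm ip g)^2" by (intro power_mono) auto
  then show ?thesis using hnorm_sq[OF I(1)] by simp
qed

lemma main: "ff \<in> V \<and> ip ff ff \<le> 1"
proof -
  have "\<exists>h\<in>V. ip h h \<le> 1 \<and> (\<forall>g l. (g,l) \<in> R \<longrightarrow> ip h g = l)"
  proof (rule riesz_rel)
    show "\<And>g l. (g,l) \<in> R \<Longrightarrow> g \<in> V" using inv_R by blast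
    show "((\<lambda>x. 0), 0) \<in> R" by (rule Rset.R0)
    show "\<And>g1 l1 g2 l2. (g1,l1) \<in> R \<Longrightarrow> (g2,l2) \<in> R \<Longrightarrow> ((\<lambda>x. g1 x + g2 x), l1 + l2) \<in> R"
      by (rule Rset.Radd)
    show "\<And>g l c. (g,l) \<in> R \<Longrightarrow> ((\<lambda>x. c * g x), c * l) \<in> R" by (rule Rset.Rsc)
    show "\<And>g l. (g,l) \<in> R \<Longrightarrow> l^2 \<le> ip g g" by (rule bound_R)
  qed
  then obtain h where hV: "h \<in> V" and h1: "ip h h \<le> 1" and hR: "\<And>g l. (g,l) \<in> R \<Longrightarrow> ip h g = l"
    by blast
  have "ff = h"
  proof
    fix x
    show "ff x = h x"
    proof (cases "x \<in> space M")
      case True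
      have "ip h (kk x) = ff x" using hR[OF Rset.Rk[OF True]] unfolding kk_def .
      moreover have "ip h (kk x) = h x" using repr[OF True hV] unfolding kk_def .
      ultimately show ?thesis by simp
    next
      case False
      have "h x = ext0 (space M) h x" using V_ext[OF hV] by simp
      then have "h x = 0" using False unfolding ext0_def by simp
      moreover have "ff x = 0" using False unfolding ff_def symmetrize_def ext0_def by simp
      ultimately show ?thesis by simp
    qed
  qed
  then show ?thesis using hV h1 by simp
qed

end


theorem lemma2:
  fixes M :: "'a measure"
    and \<mu> :: "'g::{topological_group_add, t2_space} measure"
    and T :: "'g \<Rightarrow> 'a \<Rightarrow> 'a"
    and V :: "('a \<Rightarrow> real) set"
    and ip :: "('a \<Rightarrow> real) \<Rightarrow> ('a \<Rightarrow> real) \<Rightarrow> real"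
    and k :: "'a \<Rightarrow> 'a \<Rightarrow> real"
  assumes compact_group: "compact (UNIV :: 'g set)"
    and haar: "haar_probability \<mu>"
    and action: "measurable_action M T"
    and rkhs: "rkhs (space M) V ip k"
    and separable: "separable_hs V ip"
    and bounded_measurable: "\<forall>f \<in> V. f \<in> borel_measurable M \<and> (\<exists>B. \<forall>x \<in> space M. \<bar>f x\<bar> \<le> B)"
    and invariant: "\<forall>\<sigma>. \<forall>x \<in> space M. \<forall>y \<in> space M. k (T \<sigma> x) (T \<sigma> y) = k x y"
  shows "symmetrize \<mu> M T ` {\<gamma> \<in> V. hnorm ip \<gamma> \<le> 1} \<subseteq> {\<gamma> \<in> V. hnorm ip \<gamma> \<le> 1}"
proof (rule image_subsetI)
  fix \<gamma> assume "\<gamma> \<in> {\<gamma> \<in> V. hnorm ip \<gamma> \<le> 1}"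
  then have gV: "\<gamma> \<in> V" and gn: "hnorm ip \<gamma> \<le> 1" by auto
  have g1: "ip \<gamma> \<gamma> \<le> 1" using gn unfolding hnorm_def by simp
  have prob: "prob_space \<mu>" and sets: "sets \<mu> = sets borel"
    using haar unfolding haar_probability_def by auto
  interpret setting M V ip k \<mu> T \<gamma>
    apply (intro setting.intro rk.intro setting_axioms.intro)
    apply (fact rkhs)
    apply (fact prob)
    apply (fact sets)
    apply (fact action)
    apply (fact bounded_measurable)
    apply (fact invariant)
    apply (fact gV)
    apply (fact g1)
    done
  have "ff \<in> V \<and> ip ff ff \<le> 1" by (rule main)
  then show "symmetrize \<mu> M T \<gamma> \<in> {\<gamma> \<in> V. hnorm ip \<gamma> \<le> 1}"
    unfolding ff_def hnorm_def by simp
qed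

end
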